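(* Let $s$ be a positive integer and $D^\infty=\{a=(a_{i,j})_{i,j\ge0,\ i+j>2s}:\ a_{i,j}\in\mathbb{C},\ |a_{i,j}|\le1\}$. For $a$ put $\tilde a(\xi,\eta)=\sum_{i+j>2s}a_{i,j}\xi^i\eta^j$, and let $b^*(\xi,\eta,a)$ be the formal power series in $\xi,\eta$ and the variables $a_{i,j}$, without constant term, determined by $$b^*(\xi,\eta,a)=\tilde a\big(e^{b^*(\xi,\eta,a)}\xi,\ e^{b^*(\xi,\eta,a)}\eta\big).$$ Define $\psi_a(\xi,\eta)=\big(e^{b^*(\xi,\eta,a)}\xi,\ e^{b^*(\xi,\eta,a)}\eta\big)$. Then there exists a constant $R_1\in(0,1)$, independent of $a\in D^\infty$, such that $\psi_a$ is given by power series converging (absolutely) for $(\xi,\eta,a)\in\Delta_{R_1}\times D^\infty$, and for each $a\in D^\infty$, $\psi_a$ maps $\Delta_{R_1}$ into $\Delta_{1/3}$.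
   Context: $\Delta_r=\{(\xi,\eta)\in\mathbb{C}^2:|\xi|<r,|\eta|<r\}$. *)

theory Defs
  imports "HOL-Analysis.Analysis"
begin

text \<open>A monomial is a finitely supported exponent function var => nat; a formal
  power series is a coefficient function on monomials.\<close>

datatype var = Xi | Eta | A nat nat

type_synonym mon = "var \<Rightarrow> nat"
type_synonym fser = "mon \<Rightarrow> complex"

definition mons :: "mon set" where
  "mons = {m. finite {v. m v \<noteq> 0}}"

definition mdeg :: "mon \<Rightarrow> nat" where
  "mdeg m = (\<Sum>v\<in>{v. m v \<noteq> 0}. m v)"

definition fone :: fser where
  "fone m = (if (\<forall>v. m v = 0) then 1 else 0)"

definition fmul :: "fser \<Rightarrow> fser \<Rightarrow> fser" where
  "fmul f g m = (\<Sum>p\<in>{p. \<forall>v. p v \<le> m v}. f p * g (\<lambda>v. m v - p v))"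

primrec fpow :: "fser \<Rightarrow> nat \<Rightarrow> fser" where
  "fpow f 0 = fone"
| "fpow f (Suc n) = fmul f (fpow f n)"

text \<open>Exponential of a series without constant term (the truncation at the
  total degree is exact in that case).\<close>
definition fexp :: "fser \<Rightarrow> fser" where
  "fexp f m = (\<Sum>n\<le>mdeg m. fpow f n m / of_nat (fact n))"

definition fscale :: "complex \<Rightarrow> fser \<Rightarrow> fser" where
  "fscale c f m = c * f m"

definition fxi :: fser where
  "fxi m = (if m = (\<lambda>v. if v = Xi then 1 else 0) then 1 else 0)"

definition feta :: fser where
  "feta m = (if m = (\<lambda>v. if v = Eta then 1 else 0) then 1 else 0)"

definition fterm :: "nat \<Rightarrow> nat \<Rightarrow> fser" where
  "fterm k l m = (if m = (\<lambda>v. if v = Xi then k else if v = Eta then l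
                             else if v = A k l then 1 else 0) then 1 else 0)"

text \<open>Right-hand side  a~(e^b xi, e^b eta) = sum_{k+l>2s} a_{k,l} xi^k eta^l e^{(k+l) b}.
  At a given monomial only finitely many (k,l) contribute (those with a_{k,l}
  occurring in the monomial).\<close>
definition frhs :: "nat \<Rightarrow> fser \<Rightarrow> fser" where
  "frhs s b m = (\<Sum>kl\<in>{(k, l). 2 * s < k + l \<and> 1 \<le> m (A k l)}.
                    fmul (fterm (fst kl) (snd kl)) (fexp (fscale (of_nat (fst kl + snd kl)) b)) m)"

definition is_bstar :: "nat \<Rightarrow> fser \<Rightarrow> bool" where
  "is_bstar s b \<longleftrightarrow> (\<forall>m. m \<notin> mons \<longrightarrow> b m = 0) \<and> b (\<lambda>v. 0) = 0
                     \<and> (\<forall>m\<in>mons. b m = frhs s b m)"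

definition psi1 :: "fser \<Rightarrow> fser" where "psi1 b = fmul (fexp b) fxi"
definition psi2 :: "fser \<Rightarrow> fser" where "psi2 b = fmul (fexp b) feta"

text \<open>Parameter space D^infinity; entries with i+j <= 2s do not exist and are set to 0.\<close>
definition Dinf :: "nat \<Rightarrow> (nat \<Rightarrow> nat \<Rightarrow> complex) set" where
  "Dinf s = {a. \<forall>i j. (2 * s < i + j \<longrightarrow> norm (a i j) \<le> 1) \<and> (i + j \<le> 2 * s \<longrightarrow> a i j = 0)}"

definition varval :: "complex \<Rightarrow> complex \<Rightarrow> (nat \<Rightarrow> nat \<Rightarrow> complex) \<Rightarrow> var \<Rightarrow> complex" where
  "varval x y a v = (case v of Xi \<Rightarrow> x | Eta \<Rightarrow> y | A i j \<Rightarrow> a i j)"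

definition mval :: "complex \<Rightarrow> complex \<Rightarrow> (nat \<Rightarrow> nat \<Rightarrow> complex) \<Rightarrow> mon \<Rightarrow> complex" where
  "mval x y a m = (\<Prod>v\<in>{v. m v \<noteq> 0}. varval x y a v ^ m v)"

definition abs_conv :: "fser \<Rightarrow> complex \<Rightarrow> complex \<Rightarrow> (nat \<Rightarrow> nat \<Rightarrow> complex) \<Rightarrow> bool" where
  "abs_conv f x y a \<longleftrightarrow> (\<lambda>m. norm (f m * mval x y a m)) summable_on mons"

definition fval :: "fser \<Rightarrow> complex \<Rightarrow> complex \<Rightarrow> (nat \<Rightarrow> nat \<Rightarrow> complex) \<Rightarrow> complex" where
  "fval f x y a = (\<Sum>\<^sub>\<infinity>m\<in>mons. f m * mval x y a m)"

end

theory Submission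
  imports Defs
begin


lemma supp_le: assumes le: "\<forall>v. p v \<le> m v" shows "{v. p v \<noteq> 0} \<subseteq> {v. m v \<noteq> (0::nat)}"
proof
  fix x assume "x \<in> {v. p v \<noteq> 0}"
  then have "p x \<noteq> 0" by simp
  moreover have "p x \<le> m x" using le by blast
  ultimately have "m x \<noteq> 0" by linarith
  then show "x \<in> {v. m v \<noteq> 0}" by simp
qed

lemma mons_le: "m \<in> mons \<Longrightarrow> \<forall>v. p v \<le> m v \<Longrightarrow> p \<in> mons"
  unfolding mons_def using supp_le[of p m] by (auto intro: finite_subset)

lemma finite_le: assumes "m \<in> mons" shows "finite {p. \<forall>v. p v \<le> m v}"
proof -
  let ?A = "{v. m v \<noteq> 0}"
  have fA: "finite ?A" using assms by (simp add: mons_def)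
  have "{p. \<forall>v. p v \<le> m v} \<subseteq> {f. \<forall>x. (x \<in> ?A \<longrightarrow> f x \<in> {..mdeg m}) \<and> (x \<notin> ?A \<longrightarrow> f x = 0)}"
  proof (rule subsetI, unfold mem_Collect_eq, intro allI conjI impI)
    fix p x assume le: "\<forall>v. p v \<le> m v" and "m x \<noteq> 0"
    then have "m x \<le> mdeg m" unfolding mdeg_def using fA
      by (intro member_le_sum) auto
    moreover have "p x \<le> m x" using le by blast
    ultimately show "p x \<in> {..mdeg m}" by simp
  next
    fix p x assume le: "\<forall>v. p v \<le> m v" and "\<not> m x \<noteq> 0"
    moreover have "p x \<le> m x" using le by blast
    ultimately show "p x = 0" by simp
  qed
  moreover have "finite {f. \<forall>x. (x \<in> ?A \<longrightarrow> f x \<in> {..mdeg m}) \<and> (x \<notin> ?A \<longrightarrow> f x = (0::nat))}"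
    by (rule finite_set_of_finite_funs) (use fA in auto)
  ultimately show ?thesis by (rule finite_subset)
qed

lemma mdeg_less: assumes "m \<in> mons" "\<forall>v. q v \<le> m v" "q \<noteq> m" shows "mdeg q < mdeg m"
proof -
  let ?A = "{v. m v \<noteq> 0}"
  have fA: "finite ?A" using assms by (simp add: mons_def)
  have sub: "{v. q v \<noteq> 0} \<subseteq> ?A" using supp_le[OF assms(2)] .
  have "mdeg q = (\<Sum>v\<in>?A. q v)" unfolding mdeg_def
    by (rule sum.mono_neutral_left[OF fA sub]) auto
  also have "\<dots> < (\<Sum>v\<in>?A. m v)"
  proof (rule sum_strict_mono_ex1[OF fA])
    show "\<forall>x\<in>?A. q x \<le> m x" using assms(2) by auto
    obtain v where "q v \<noteq> m v" using assms(3) by auto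
    then have "q v < m v" using assms(2) by (metis le_neq_implies_less)
    then show "\<exists>a\<in>?A. q a < m a" by (intro bexI[of _ v]) auto
  qed
  finally show ?thesis unfolding mdeg_def .
qed

lemma fmul_local:
  assumes "\<And>p. \<forall>v. p v \<le> m v \<Longrightarrow> f p = f' p"
    and "\<And>p. \<forall>v. p v \<le> m v \<Longrightarrow> g p = g' p"
  shows "fmul f g m = fmul f' g' m"
  unfolding fmul_def by (rule sum.cong) (auto simp: assms)

lemma fpow_local:
  "(\<And>q. \<forall>v. q v \<le> m v \<Longrightarrow> f q = g q) \<Longrightarrow> fpow f n m = fpow g n m"
proof (induction n arbitrary: m)
  case 0 then show ?case by simp
next
  case (Suc n)
  show ?case unfolding fpow.simps
  proof (rule fmul_local)
    show "\<And>p. \<forall>v. p v \<le> m v \<Longrightarrow> f p = g p" using Suc.prems by auto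
    fix p assume p: "\<forall>v. p v \<le> m v"
    show "fpow f n p = fpow g n p"
      by (rule Suc.IH) (use p Suc.prems in \<open>metis order_trans\<close>)
  qed
qed

lemma fexp_local:
  "(\<And>q. \<forall>v. q v \<le> m v \<Longrightarrow> f q = g q) \<Longrightarrow> fexp f m = fexp g m"
  unfolding fexp_def by (rule sum.cong) (auto intro!: fpow_local)

lemma frhs_local:
  assumes "\<And>q. \<forall>v. q v \<le> m v \<Longrightarrow> q \<noteq> m \<Longrightarrow> b q = c q"
  shows "frhs s b m = frhs s c m"
  unfolding frhs_def
proof (rule sum.cong[OF refl])
  fix kl assume "kl \<in> {(k, l). 2 * s < k + l \<and> 1 \<le> m (A k l)}"
  then obtain k l where kl: "kl = (k, l)" "1 \<le> m (A k l)" by auto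
  show "fmul (fterm (fst kl) (snd kl)) (fexp (fscale (of_nat (fst kl + snd kl)) b)) m =
        fmul (fterm (fst kl) (snd kl)) (fexp (fscale (of_nat (fst kl + snd kl)) c)) m"
    unfolding fmul_def kl fst_conv snd_conv
  proof (rule sum.cong[OF refl])
    fix p assume p: "p \<in> {p. \<forall>v. p v \<le> m v}"
    show "fterm k l p * fexp (fscale (of_nat (k + l)) b) (\<lambda>v. m v - p v) =
          fterm k l p * fexp (fscale (of_nat (k + l)) c) (\<lambda>v. m v - p v)"
    proof (cases "fterm k l p = 0")
      case False
      then have pA: "p (A k l) = 1" by (auto simp: fterm_def split: if_splits)
      have "fexp (fscale (of_nat (k + l)) b) (\<lambda>v. m v - p v) = fexp (fscale (of_nat (k + l)) c) (\<lambda>v. m v - p v)"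
      proof (rule fexp_local)
        fix q assume q: "\<forall>v. q v \<le> m v - p v"
        have "\<forall>v. q v \<le> m v" using q by (metis diff_le_self order_trans)
        moreover have "q \<noteq> m" using q[rule_format, of "A k l"] pA kl(2) by auto
        ultimately show "fscale (of_nat (k + l)) b q = fscale (of_nat (k + l)) c q"
          unfolding fscale_def using assms by auto
      qed
      then show ?thesis by simp
    qed simp
  qed
qed

lemma frhs_local_mons:
  assumes "m \<in> mons" "\<And>q. q \<in> mons \<Longrightarrow> mdeg q < mdeg m \<Longrightarrow> b q = c q"
  shows "frhs s b m = frhs s c m"
  by (rule frhs_local) (use assms mons_le mdeg_less in blast)

lemma bstar_unique:
  assumes "is_bstar s b" "is_bstar s c" shows "b = c"
proof
  fix m
  show "b m = c m"
  proof (cases "m \<in> mons")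
    case False then show ?thesis using assms by (simp add: is_bstar_def)
  next
    case True
    have "\<forall>m\<in>mons. mdeg m = d \<longrightarrow> b m = c m" for d
    proof (induction d rule: less_induct)
      case (less d)
      show ?case
      proof (intro ballI impI)
        fix m assume m: "m \<in> mons" "mdeg m = d"
        have "b m = frhs s b m" using assms m by (simp add: is_bstar_def)
        also have "\<dots> = frhs s c m"
          by (rule frhs_local_mons) (use m less in auto)
        also have "\<dots> = c m" using assms m by (simp add: is_bstar_def)
        finally show "b m = c m" .
      qed
    qed
    then show ?thesis using True by blast
  qed
qed

definition Fs :: "nat \<Rightarrow> fser \<Rightarrow> fser" where
  "Fs s b m = (if m \<in> mons then frhs s b m else 0)"

definition itb :: "nat \<Rightarrow> nat \<Rightarrow> fser" where
  "itb s n = (Fs s ^^ n) (\<lambda>_. 0)"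

lemma itb_Suc: "itb s (Suc n) m = (if m \<in> mons then frhs s (itb s n) m else 0)"
  by (simp add: itb_def Fs_def)

lemma itb_step: "\<forall>m\<in>mons. mdeg m < n \<longrightarrow> itb s (Suc n) m = itb s n m"
proof (induction n)
  case 0 then show ?case by simp
next
  case (Suc n)
  show ?case
  proof (intro ballI impI)
    fix m assume m: "m \<in> mons" "mdeg m < Suc n"
    have "itb s (Suc (Suc n)) m = frhs s (itb s (Suc n)) m" using m by (simp add: itb_Suc)
    also have "\<dots> = frhs s (itb s n) m"
      by (rule frhs_local_mons) (use m Suc.IH in auto)
    also have "\<dots> = itb s (Suc n) m" using m by (simp add: itb_Suc)
    finally show "itb s (Suc (Suc n)) m = itb s (Suc n) m" .
  qed
qed

lemma itb_stable: "m \<in> mons \<Longrightarrow> mdeg m < n \<Longrightarrow> itb s (n + k) m = itb s n m"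
proof (induction k)
  case (Suc k)
  have "itb s (Suc (n + k)) m = itb s (n + k) m" using itb_step[of "n+k" s] Suc.prems by auto
  then show ?case using Suc by simp
qed simp

definition bsol :: "nat \<Rightarrow> fser" where "bsol s m = itb s (Suc (mdeg m)) m"

lemma bsol_eq: "m \<in> mons \<Longrightarrow> mdeg m < n \<Longrightarrow> bsol s m = itb s n m"
  unfolding bsol_def using itb_stable[of m "Suc (mdeg m)" s "n - Suc (mdeg m)"] by simp

lemma bsol_is_bstar: "is_bstar s (bsol s)"
  unfolding is_bstar_def
proof (intro conjI allI impI ballI)
  fix m assume "m \<notin> mons" then show "bsol s m = 0" by (simp add: bsol_def itb_Suc)
next
  show "bsol s (\<lambda>v. 0) = 0" by (simp add: bsol_def itb_Suc frhs_def)
next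
  fix m assume m: "m \<in> mons"
  have "bsol s m = frhs s (itb s (mdeg m)) m" using m by (simp add: bsol_def itb_Suc)
  also have "\<dots> = frhs s (bsol s) m"
    by (rule frhs_local_mons) (use m bsol_eq in auto)
  finally show "bsol s m = frhs s (bsol s) m" .
qed

lemma ex1_bstar: "\<exists>!b. is_bstar s b"
  using bsol_is_bstar bstar_unique by blast



definition wt :: "real \<Rightarrow> mon \<Rightarrow> real" where "wt r m = r ^ (m Xi + m Eta)"

definition fb :: "real \<Rightarrow> fser \<Rightarrow> real \<Rightarrow> bool" where
  "fb r f B \<longleftrightarrow> (\<forall>F. finite F \<and> F \<subseteq> mons \<longrightarrow> (\<Sum>m\<in>F. norm (f m) * wt r m) \<le> B)"

lemma wt_nonneg: "0 \<le> r \<Longrightarrow> 0 \<le> wt r m" by (simp add: wt_def)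

lemma fbD: "fb r f B \<Longrightarrow> finite F \<Longrightarrow> F \<subseteq> mons \<Longrightarrow> (\<Sum>m\<in>F. norm (f m) * wt r m) \<le> B"
  by (simp add: fb_def)

lemma fb_nonneg: "fb r f B \<Longrightarrow> 0 \<le> B"
  using fbD[of r f B "{}"] by simp

lemma fb_mono: "fb r f B \<Longrightarrow> B \<le> B' \<Longrightarrow> fb r f B'"
  unfolding fb_def by force

lemma fb_dom:
  assumes "\<And>m. m \<in> mons \<Longrightarrow> norm (f m) \<le> norm (g m)" "0 \<le> r" "fb r g B"
  shows "fb r f B"
  unfolding fb_def
proof (intro allI impI, elim conjE)
  fix F assume F: "finite F" "F \<subseteq> mons"
  have "(\<Sum>m\<in>F. norm (f m) * wt r m) \<le> (\<Sum>m\<in>F. norm (g m) * wt r m)"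
    by (rule sum_mono, rule mult_right_mono) (use assms F wt_nonneg in auto)
  also have "\<dots> \<le> B" using fbD[OF assms(3) F] .
  finally show "(\<Sum>m\<in>F. norm (f m) * wt r m) \<le> B" .
qed

lemma wt_split: "\<forall>v. p v \<le> m v \<Longrightarrow> wt r m = wt r p * wt r (\<lambda>v. m v - p v)"
proof -
  assume le: "\<forall>v. p v \<le> m v"
  have a: "p Xi \<le> m Xi" using le by blast
  have b: "p Eta \<le> m Eta" using le by blast
  have eq: "m Xi + m Eta = (p Xi + p Eta) + ((m Xi - p Xi) + (m Eta - p Eta))"
    using a b by simp
  show ?thesis unfolding wt_def by (metis eq power_add)
qed

lemma fb_fmul:
  assumes r: "0 \<le> r" and f: "fb r f Bf" and g: "fb r g Bg"
  shows "fb r (fmul f g) (Bf * Bg)"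
  unfolding fb_def
proof (intro allI impI, elim conjE)
  fix F assume F: "finite F" "F \<subseteq> mons"
  define P where "P = (\<lambda>m::mon. {p. \<forall>v. p v \<le> m v})"
  define H where "H = (\<lambda>p q. (norm (f p) * wt r p) * (norm (g q) * wt r q))"
  define S where "S = Sigma F P"
  define \<phi> where "\<phi> = (\<lambda>(m::mon,p::mon). (p, (\<lambda>v. m v - p v)))"
  have finP: "\<forall>m\<in>F. finite (P m)" using F finite_le unfolding P_def by blast
  have finS: "finite S" unfolding S_def using F(1) finP by auto
  have "(\<Sum>m\<in>F. norm (fmul f g m) * wt r m) \<le> (\<Sum>m\<in>F. \<Sum>p\<in>P m. H p (\<lambda>v. m v - p v))"
  proof (rule sum_mono)
    fix m assume m: "m \<in> F"
    have "norm (fmul f g m) * wt r m \<le> (\<Sum>p\<in>P m. norm (f p * g (\<lambda>v. m v - p v))) * wt r m"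
      unfolding fmul_def P_def by (rule mult_right_mono[OF norm_sum]) (simp add: wt_nonneg r)
    also have "\<dots> = (\<Sum>p\<in>P m. H p (\<lambda>v. m v - p v))"
      unfolding sum_distrib_right H_def
    proof (rule sum.cong[OF refl])
      fix p assume "p \<in> P m"
      then have "wt r m = wt r p * wt r (\<lambda>v. m v - p v)" unfolding P_def by (simp add: wt_split)
      then show "norm (f p * g (\<lambda>v. m v - p v)) * wt r m = norm (f p) * wt r p * (norm (g (\<lambda>v. m v - p v)) * wt r (\<lambda>v. m v - p v))"
        by (simp add: norm_mult)
    qed
    finally show "norm (fmul f g m) * wt r m \<le> (\<Sum>p\<in>P m. H p (\<lambda>v. m v - p v))" .
  qed
  also have "\<dots> = (\<Sum>(m,p)\<in>S. H p (\<lambda>v. m v - p v))"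
    unfolding S_def by (rule sum.Sigma[OF F(1) finP])
  also have "\<dots> = (\<Sum>z\<in>\<phi> ` S. H (fst z) (snd z))"
  proof -
    have inj: "inj_on \<phi> S"
    proof (rule inj_onI)
      fix z1 z2 assume z: "z1 \<in> S" "z2 \<in> S" "\<phi> z1 = \<phi> z2"
      obtain m1 p1 where z1: "z1 = (m1, p1)" "\<forall>v. p1 v \<le> m1 v" using z(1) unfolding S_def P_def by auto
      obtain m2 p2 where z2: "z2 = (m2, p2)" "\<forall>v. p2 v \<le> m2 v" using z(2) unfolding S_def P_def by auto
      have e: "p1 = p2" "(\<lambda>v. m1 v - p1 v) = (\<lambda>v. m2 v - p2 v)" using z(3) z1 z2 by (auto simp: \<phi>_def)
      have "m1 = m2"
      proof
        fix v
        have "m1 v - p1 v = m2 v - p2 v" using e(2) by meson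
        then show "m1 v = m2 v" using z1(2) z2(2) e(1) by (metis le_add_diff_inverse)
      qed
      then show "z1 = z2" using z1 z2 e by simp
    qed
    show ?thesis
      by (subst sum.reindex[OF inj]) (simp add: \<phi>_def case_prod_unfold)
  qed
  also have "\<dots> \<le> (\<Sum>z\<in>(fst ` \<phi> ` S) \<times> (snd ` \<phi> ` S). H (fst z) (snd z))"
  proof (rule sum_mono2)
    show "finite (fst ` \<phi> ` S \<times> snd ` \<phi> ` S)" using finS by simp
    show "\<phi> ` S \<subseteq> fst ` \<phi> ` S \<times> snd ` \<phi> ` S" 
    proof
      fix z assume z: "z \<in> \<phi> ` S"
      have "fst z \<in> fst ` \<phi> ` S" using z by (rule imageI)
      moreover have "snd z \<in> snd ` \<phi> ` S" using z by (rule imageI)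
      ultimately show "z \<in> fst ` \<phi> ` S \<times> snd ` \<phi> ` S" by (simp add: mem_Times_iff)
    qed
    show "\<And>b. b \<in> fst ` \<phi> ` S \<times> snd ` \<phi> ` S - \<phi> ` S \<Longrightarrow> 0 \<le> H (fst b) (snd b)"
      unfolding H_def using r by (intro mult_nonneg_nonneg norm_ge_zero wt_nonneg)
  qed
  also have "\<dots> = (\<Sum>p\<in>fst ` \<phi> ` S. \<Sum>q\<in>snd ` \<phi> ` S. H p q)"
    by (subst sum.cartesian_product) (simp add: case_prod_unfold)
  also have "\<dots> = (\<Sum>p\<in>fst ` \<phi> ` S. norm (f p) * wt r p) * (\<Sum>q\<in>snd ` \<phi> ` S. norm (g q) * wt r q)"
    by (simp only: H_def sum_product)
  also have "\<dots> \<le> Bf * Bg"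
  proof (rule mult_mono)
    have sub1: "fst ` \<phi> ` S \<subseteq> mons"
    proof
      fix q assume "q \<in> fst ` \<phi> ` S"
      then obtain m where "m \<in> F" "\<forall>v. q v \<le> m v" unfolding S_def \<phi>_def P_def by auto
      then show "q \<in> mons" using F(2) mons_le[of m q] by auto
    qed
    have sub2: "snd ` \<phi> ` S \<subseteq> mons"
    proof
      fix q assume "q \<in> snd ` \<phi> ` S"
      then obtain m p where "m \<in> F" "q = (\<lambda>v. m v - p v)" unfolding S_def \<phi>_def by auto
      then show "q \<in> mons" using F(2) mons_le[of m q] by auto
    qed
    show "(\<Sum>p\<in>fst ` \<phi> ` S. norm (f p) * wt r p) \<le> Bf" using fbD[OF f _ sub1] finS by simp
    show "(\<Sum>q\<in>snd ` \<phi> ` S. norm (g q) * wt r q) \<le> Bg" using fbD[OF g _ sub2] finS by simp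
    show "0 \<le> Bf" using fb_nonneg[OF f] .
    show "0 \<le> (\<Sum>q\<in>snd ` \<phi> ` S. norm (g q) * wt r q)" using r wt_nonneg by (auto intro: sum_nonneg)
  qed
  finally show "(\<Sum>m\<in>F. norm (fmul f g m) * wt r m) \<le> Bf * Bg" .
qed

lemma fb_single:
  assumes "\<And>m. f m = (if m = t then 1 else 0)" "0 \<le> r"
  shows "fb r f (wt r t)"
  unfolding fb_def
proof (intro allI impI, elim conjE)
  fix F :: "mon set" assume F: "finite F" "F \<subseteq> mons"
  have "(\<Sum>m\<in>F. norm (f m) * wt r m) = (\<Sum>m\<in>F. if m = t then wt r t else 0)"
    by (rule sum.cong) (auto simp: assms)
  also have "\<dots> = (if t \<in> F then wt r t else 0)" using F(1) by (simp add: sum.delta')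
  also have "\<dots> \<le> wt r t" using wt_nonneg[OF assms(2)] by simp
  finally show "(\<Sum>m\<in>F. norm (f m) * wt r m) \<le> wt r t" .
qed

lemma fb_fone: "0 \<le> r \<Longrightarrow> fb r fone 1"
proof -
  assume r: "0 \<le> r"
  have "fb r fone (wt r (\<lambda>v. 0))"
    by (rule fb_single[OF _ r]) (auto simp: fone_def fun_eq_iff)
  then show ?thesis by (simp add: wt_def)
qed

lemma fb_fpow: "0 \<le> r \<Longrightarrow> fb r f B \<Longrightarrow> fb r (fpow f n) (B ^ n)"
  by (induction n) (auto simp: fb_fone intro: fb_fmul)

lemma exp_partial_le: "0 \<le> (x::real) \<Longrightarrow> (\<Sum>n\<le>N. x ^ n / fact n) \<le> exp x"
proof -
  assume x: "0 \<le> x"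
  have s: "summable (\<lambda>n. x ^ n / fact n)"
    using summable_exp_generic[of x] by (simp add: divide_inverse mult.commute)
  have e: "exp x = (\<Sum>n. x ^ n / fact n)"
    by (simp add: exp_def divide_inverse mult.commute)
  show ?thesis unfolding e
    by (rule sum_le_suminf[OF s]) (use x in auto)
qed

lemma fb_fexp:
  assumes r: "0 \<le> r" and f: "fb r f B"
  shows "fb r (fexp f) (exp B)"
  unfolding fb_def
proof (intro allI impI, elim conjE)
  fix F assume F: "finite F" "F \<subseteq> mons"
  define N where "N = (\<Sum>m\<in>F. mdeg m)"
  have B0: "0 \<le> B" using fb_nonneg[OF f] .
  have "(\<Sum>m\<in>F. norm (fexp f m) * wt r m) \<le> (\<Sum>m\<in>F. \<Sum>n\<le>N. norm (fpow f n m) * wt r m / fact n)"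
  proof (rule sum_mono)
    fix m assume m: "m \<in> F"
    have "norm (fexp f m) * wt r m \<le> (\<Sum>n\<le>mdeg m. norm (fpow f n m / of_nat (fact n))) * wt r m"
      unfolding fexp_def by (rule mult_right_mono[OF norm_sum]) (simp add: wt_nonneg r)
    also have "\<dots> = (\<Sum>n\<le>mdeg m. norm (fpow f n m) * wt r m / fact n)"
      unfolding sum_distrib_right by (rule sum.cong) (auto simp: norm_divide)
    also have "\<dots> \<le> (\<Sum>n\<le>N. norm (fpow f n m) * wt r m / fact n)"
    proof (rule sum_mono2)
      have "mdeg m \<le> N" unfolding N_def by (rule member_le_sum) (use m F(1) in auto)
      then show "{..mdeg m} \<subseteq> {..N}" by auto
    qed (use r wt_nonneg in auto)
    finally show "norm (fexp f m) * wt r m \<le> (\<Sum>n\<le>N. norm (fpow f n m) * wt r m / fact n)" .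
  qed
  also have "\<dots> = (\<Sum>n\<le>N. (\<Sum>m\<in>F. norm (fpow f n m) * wt r m) / fact n)"
    by (subst sum.swap) (simp add: sum_divide_distrib)
  also have "\<dots> \<le> (\<Sum>n\<le>N. B ^ n / fact n)"
    by (rule sum_mono, rule divide_right_mono) (use fbD[OF fb_fpow[OF r f] F(1) F(2)] in auto)
  also have "\<dots> \<le> exp B" by (rule exp_partial_le[OF B0])
  finally show "(\<Sum>m\<in>F. norm (fexp f m) * wt r m) \<le> exp B" .
qed

lemma fb_fscale:
  assumes f: "fb r f B" shows "fb r (fscale c f) (norm c * B)"
  unfolding fb_def
proof (intro allI impI, elim conjE)
  fix F assume F: "finite F" "F \<subseteq> mons"
  have "(\<Sum>m\<in>F. norm (fscale c f m) * wt r m) = norm c * (\<Sum>m\<in>F. norm (f m) * wt r m)"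
    by (simp add: fscale_def norm_mult sum_distrib_left mult.assoc)
  also have "\<dots> \<le> norm c * B" by (rule mult_left_mono[OF fbD[OF f F]]) simp
  finally show "(\<Sum>m\<in>F. norm (fscale c f m) * wt r m) \<le> norm c * B" .
qed

lemma fb_fterm: "0 \<le> r \<Longrightarrow> fb r (fterm k l) (r ^ (k + l))"
proof -
  assume r: "0 \<le> r"
  let ?t = "(\<lambda>v. if v = Xi then k else if v = Eta then l else if v = A k l then 1 else 0)"
  have "fb r (fterm k l) (wt r ?t)"
    by (rule fb_single[OF _ r]) (simp add: fterm_def)
  then show ?thesis by (simp add: wt_def)
qed

lemma fb_fxi: "0 \<le> r \<Longrightarrow> fb r fxi r"
proof -
  assume r: "0 \<le> r"
  have "fb r fxi (wt r (\<lambda>v. if v = Xi then 1 else 0))"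
    by (rule fb_single[OF _ r]) (simp add: fxi_def)
  then show ?thesis by (simp add: wt_def)
qed

lemma fb_feta: "0 \<le> r \<Longrightarrow> fb r feta r"
proof -
  assume r: "0 \<le> r"
  have "fb r feta (wt r (\<lambda>v. if v = Eta then 1 else 0))"
    by (rule fb_single[OF _ r]) (simp add: feta_def)
  then show ?thesis by (simp add: wt_def)
qed


lemma geo_half: "(\<Sum>k\<le>M. (1/2::real) ^ k) \<le> 2"
proof -
  have "(\<Sum>k\<le>M. (1/2::real) ^ k) = 2 - (1/2) ^ M" by (induction M) auto
  then show ?thesis by simp
qed

lemma pow_bound:
  assumes "0 \<le> q" "q \<le> (1/2::real)" "3 \<le> n"
  shows "q ^ n \<le> 8 * q ^ 3 * (1/2) ^ n"
proof -
  have "(2 * q) ^ n \<le> (2 * q) ^ 3" by (rule power_decreasing) (use assms in auto)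
  then have "(2 * q) ^ n * (1/2) ^ n \<le> (2 * q) ^ 3 * (1/2) ^ n"
    by (rule mult_right_mono) simp
  moreover have "(2 * q) ^ n * (1/2) ^ n = q ^ n"
  proof -
    have "(2 * q) ^ n * (1/2) ^ n = (2 * q * (1/2)) ^ n" by (rule power_mult_distrib[symmetric])
    then show ?thesis by simp
  qed
  moreover have "(2 * q) ^ 3 = 8 * q ^ 3" by (simp add: power_mult_distrib)
  ultimately show ?thesis by metis
qed

lemma fb_frhs:
  assumes r: "0 \<le> r" and q: "r * exp 1 \<le> 1/2" and s: "0 < s" and c: "fb r c 1"
  shows "fb r (frhs s c) (32 * (r * exp 1) ^ 3)"
  unfolding fb_def
proof (intro allI impI, elim conjE)
  fix F assume F: "finite F" "F \<subseteq> mons"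
  define S where "S = (\<lambda>m::mon. {(k, l). 2 * s < k + l \<and> 1 \<le> m (A k l)})"
  define G where "G = (\<lambda>kl. fmul (fterm (fst kl) (snd kl)) (fexp (fscale (of_nat (fst kl + snd kl)) c)))"
  define K where "K = (\<Union>m\<in>F. S m)"
  define q where "q = r * exp 1"
  have q0: "0 \<le> q" unfolding q_def using r by simp
  have q2: "q \<le> 1/2" unfolding q_def using q .
  have finS: "finite (S m)" if m: "m \<in> mons" for m
  proof -
    have inj: "inj (\<lambda>(k, l). A k l)" by (auto simp: inj_on_def)
    have "finite ((\<lambda>(k, l). A k l) -` {v. m v \<noteq> 0})"
      by (rule finite_vimageI[OF _ inj]) (use m in \<open>simp add: mons_def\<close>)
    moreover have "S m \<subseteq> (\<lambda>(k, l). A k l) -` {v. m v \<noteq> 0}" unfolding S_def by auto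
    ultimately show ?thesis by (rule finite_subset[rotated])
  qed
  have finK: "finite K" unfolding K_def using F finS by auto
  have fbG: "fb r (G kl) (q ^ (fst kl + snd kl))" for kl
  proof -
    have "fb r (G kl) (r ^ (fst kl + snd kl) * exp (norm (of_nat (fst kl + snd kl) :: complex) * 1))"
      unfolding G_def by (intro fb_fmul fb_fterm fb_fexp fb_fscale r c)
    moreover have "exp (norm (of_nat (fst kl + snd kl) :: complex) * 1) = exp 1 ^ (fst kl + snd kl)"
      by (metis exp_of_nat_mult norm_of_nat)
    ultimately show ?thesis unfolding q_def by (simp add: power_mult_distrib)
  qed
  define M where "M = (\<Sum>kl\<in>K. fst kl + snd kl)"
  have "(\<Sum>m\<in>F. norm (frhs s c m) * wt r m) \<le> (\<Sum>m\<in>F. \<Sum>kl\<in>S m. norm (G kl m) * wt r m)"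
  proof (rule sum_mono)
    fix m assume m: "m \<in> F"
    have "frhs s c m = (\<Sum>kl\<in>S m. G kl m)" by (simp add: frhs_def G_def S_def)
    then have "norm (frhs s c m) * wt r m \<le> (\<Sum>kl\<in>S m. norm (G kl m)) * wt r m"
      by (simp add: mult_right_mono norm_sum wt_nonneg r)
    then show "norm (frhs s c m) * wt r m \<le> (\<Sum>kl\<in>S m. norm (G kl m) * wt r m)"
      by (simp add: sum_distrib_right)
  qed
  also have "\<dots> \<le> (\<Sum>m\<in>F. \<Sum>kl\<in>K. norm (G kl m) * wt r m)"
  proof (rule sum_mono, rule sum_mono2[OF finK])
    fix m assume "m \<in> F" then show "S m \<subseteq> K" unfolding K_def by auto
  qed (simp add: wt_nonneg r)
  also have "\<dots> = (\<Sum>kl\<in>K. \<Sum>m\<in>F. norm (G kl m) * wt r m)" by (rule sum.swap)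
  also have "\<dots> \<le> (\<Sum>kl\<in>K. q ^ (fst kl + snd kl))"
    by (rule sum_mono, rule fbD[OF fbG F])
  also have "\<dots> \<le> (\<Sum>kl\<in>K. 8 * q ^ 3 * ((1/2) ^ fst kl * (1/2) ^ snd kl))"
  proof (rule sum_mono)
    fix kl assume "kl \<in> K"
    then have "3 \<le> fst kl + snd kl" unfolding K_def S_def using s by auto
    then show "q ^ (fst kl + snd kl) \<le> 8 * q ^ 3 * ((1/2) ^ fst kl * (1/2) ^ snd kl)"
      using pow_bound[OF q0 q2, of "fst kl + snd kl"] by (simp only: power_add)
  qed
  also have "\<dots> \<le> (\<Sum>kl\<in>{..M} \<times> {..M}. 8 * q ^ 3 * ((1/2) ^ fst kl * (1/2) ^ snd kl))"
  proof (rule sum_mono2)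
    show "K \<subseteq> {..M} \<times> {..M}"
    proof
      fix kl assume kl: "kl \<in> K"
      have "fst kl + snd kl \<le> M" unfolding M_def by (rule member_le_sum) (use kl finK in auto)
      then show "kl \<in> {..M} \<times> {..M}" by (cases kl) auto
    qed
  qed (use q0 in auto)
  also have "\<dots> = 8 * q ^ 3 * ((\<Sum>k\<le>M. (1/2::real) ^ k) * (\<Sum>l\<le>M. (1/2::real) ^ l))"
  proof -
    have "(\<Sum>kl\<in>{..M} \<times> {..M}. (1/2::real) ^ fst kl * (1/2) ^ snd kl) = (\<Sum>k\<le>M. \<Sum>l\<le>M. (1/2::real) ^ k * (1/2) ^ l)"
      by (subst sum.cartesian_product) (simp add: case_prod_unfold)
    also have "\<dots> = (\<Sum>k\<le>M. (1/2::real) ^ k) * (\<Sum>l\<le>M. (1/2::real) ^ l)"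
      by (simp only: sum_product)
    finally show ?thesis by (simp only: sum_distrib_left[symmetric])
  qed
  also have "\<dots> \<le> 8 * q ^ 3 * (2 * 2)"
    by (rule mult_left_mono, rule mult_mono) (use geo_half q0 in \<open>auto intro: sum_nonneg\<close>)
  also have "\<dots> = 32 * (r * exp 1) ^ 3" unfolding q_def by simp
  finally show "(\<Sum>m\<in>F. norm (frhs s c m) * wt r m) \<le> 32 * (r * exp 1) ^ 3" .
qed


lemma fb_bstar:
  assumes r: "0 \<le> r" "r * exp 1 \<le> 1/2" "32 * (r * exp 1) ^ 3 \<le> 1" and s: "0 < s"
    and b: "is_bstar s b"
  shows "fb r b 1"
proof -
  define tr where "tr = (\<lambda>N m. if mdeg m < N then b m else 0)"
  have all: "fb r (tr N) 1" for N
  proof (induction N)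
    case 0 show ?case unfolding fb_def tr_def by simp
  next
    case (Suc N)
    have g: "fb r (frhs s (tr N)) 1"
      using fb_frhs[OF r(1) r(2) s Suc.IH] r(3) fb_mono by blast
    show ?case
    proof (rule fb_dom[OF _ r(1) g])
      fix m assume m: "m \<in> mons"
      show "norm (tr (Suc N) m) \<le> norm (frhs s (tr N) m)"
      proof (cases "mdeg m < Suc N")
        case True
        have "b m = frhs s b m" using b m by (simp add: is_bstar_def)
        also have "\<dots> = frhs s (tr N) m"
          by (rule frhs_local_mons) (use m True in \<open>auto simp: tr_def\<close>)
        finally show ?thesis using True by (simp add: tr_def)
      qed (simp add: tr_def)
    qed
  qed
  show ?thesis unfolding fb_def
  proof (intro allI impI, elim conjE)
    fix F assume F: "finite F" "F \<subseteq> mons"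
    define N where "N = Suc (\<Sum>m\<in>F. mdeg m)"
    have "(\<Sum>m\<in>F. norm (b m) * wt r m) = (\<Sum>m\<in>F. norm (tr N m) * wt r m)"
    proof (rule sum.cong[OF refl])
      fix m assume m: "m \<in> F"
      have "mdeg m \<le> (\<Sum>m\<in>F. mdeg m)" by (rule member_le_sum) (use m F(1) in auto)
      then show "norm (b m) * wt r m = norm (tr N m) * wt r m" by (simp add: tr_def N_def)
    qed
    also have "\<dots> \<le> 1" using fbD[OF all F] .
    finally show "(\<Sum>m\<in>F. norm (b m) * wt r m) \<le> 1" .
  qed
qed

lemma mval_bound:
  assumes "m \<in> mons" "norm x \<le> r" "norm y \<le> r" "\<And>i j. norm (a i j) \<le> 1"
  shows "norm (mval x y a m) \<le> wt r m"
proof -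
  define S where "S = {v. m v \<noteq> 0}"
  define e where "e = (\<lambda>v. if v = Xi \<or> v = Eta then m v else 0)"
  have fS: "finite S" using assms(1) by (simp add: S_def mons_def)
  have r0: "0 \<le> r" using assms(2) norm_ge_zero[of x] by linarith
  have esum: "(\<Sum>v\<in>S. e v) = m Xi + m Eta"
  proof -
    have "(\<Sum>v\<in>S. e v) = (\<Sum>v\<in>S \<union> {Xi, Eta}. e v)"
      by (rule sum.mono_neutral_left) (use fS in \<open>auto simp: e_def S_def\<close>)
    also have "\<dots> = (\<Sum>v\<in>{Xi, Eta}. e v)"
      by (rule sum.mono_neutral_right) (auto simp: fS e_def)
    also have "\<dots> = m Xi + m Eta" by (simp add: e_def)
    finally show ?thesis .
  qed
  have "norm (mval x y a m) = (\<Prod>v\<in>S. norm (varval x y a v) ^ m v)"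
    unfolding mval_def S_def by (simp add: prod_norm[symmetric] norm_power)
  also have "\<dots> \<le> (\<Prod>v\<in>S. r ^ e v)"
  proof (rule prod_mono)
    fix v assume "v \<in> S"
    show "0 \<le> norm (varval x y a v) ^ m v \<and> norm (varval x y a v) ^ m v \<le> r ^ e v"
    proof (cases v)
      case Xi then show ?thesis by (simp add: varval_def e_def power_mono assms)
    next
      case Eta then show ?thesis by (simp add: varval_def e_def power_mono assms)
    next
      case (A i j) then show ?thesis by (simp add: varval_def e_def power_le_one assms)
    qed
  qed
  also have "\<dots> = r ^ (\<Sum>v\<in>S. e v)" by (rule power_sum[symmetric])
  also have "\<dots> = wt r m" unfolding esum wt_def ..
  finally show ?thesis .
qed

lemma fb_conv:
  assumes f: "fb r f B" and xy: "norm x \<le> r" "norm y \<le> r" and a: "a \<in> Dinf s"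
  shows "abs_conv f x y a \<and> norm (fval f x y a) \<le> B"
proof -
  have a1: "norm (a i j) \<le> 1" for i j
  proof (cases "2 * s < i + j")
    case True then show ?thesis using a by (simp add: Dinf_def)
  next
    case False then show ?thesis using a by (simp add: Dinf_def)
  qed
  have r0: "0 \<le> r" using xy(1) norm_ge_zero[of x] by linarith
  have fs: "(\<Sum>m\<in>F. norm (f m * mval x y a m)) \<le> B" if F: "finite F" "F \<subseteq> mons" for F
  proof -
    have "(\<Sum>m\<in>F. norm (f m * mval x y a m)) \<le> (\<Sum>m\<in>F. norm (f m) * wt r m)"
    proof (rule sum_mono)
      fix m assume "m \<in> F"
      then have "m \<in> mons" using F by blast
      then have "norm (mval x y a m) \<le> wt r m" by (rule mval_bound[OF _ xy a1])
      then show "norm (f m * mval x y a m) \<le> norm (f m) * wt r m"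
        by (simp add: norm_mult mult_left_mono)
    qed
    also have "\<dots> \<le> B" using fbD[OF f F] .
    finally show ?thesis .
  qed
  have summ: "(\<lambda>m. norm (f m * mval x y a m)) summable_on mons"
    by (rule nonneg_bdd_above_summable_on) (auto intro!: bdd_aboveI2 fs)
  have "norm (fval f x y a) \<le> (\<Sum>\<^sub>\<infinity>m\<in>mons. norm (f m * mval x y a m))"
    unfolding fval_def by (rule norm_infsum_bound) (use summ in simp)
  also have "\<dots> \<le> B" by (rule infsum_le_finite_sums[OF summ]) (use fs in auto)
  finally show ?thesis using summ unfolding abs_conv_def by simp
qed

theorem lemma4p2:
  fixes s :: nat
  assumes "0 < s"
  shows "(\<exists>!b. is_bstar s b) \<and>
    (\<exists>R1::real. 0 < R1 \<and> R1 < 1 \<and>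
      (\<forall>b. is_bstar s b \<longrightarrow>
        (\<forall>x y a. norm x < R1 \<and> norm y < R1 \<and> a \<in> Dinf s \<longrightarrow>
           abs_conv (psi1 b) x y a \<and> abs_conv (psi2 b) x y a \<and>
           norm (fval (psi1 b) x y a) < 1/3 \<and> norm (fval (psi2 b) x y a) < 1/3)))"
proof (intro conjI ex1_bstar exI[of _ "1/20"] allI impI)
  define r :: real where "r = 1/20"
  have r0: "0 \<le> r" by (simp add: r_def)
  have e3: "exp 1 \<le> (3::real)" by (rule exp_le)
  have q: "r * exp 1 \<le> 3/20" using e3 by (simp add: r_def)
  have q2: "r * exp 1 \<le> 1/2" using q by simp
  have q3: "32 * (r * exp 1) ^ 3 \<le> 1"
  proof -
    have "(r * exp 1) ^ 3 \<le> (3/20) ^ 3" by (rule power_mono[OF q]) (simp add: r_def)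
    moreover have "(3/20::real) ^ 3 = 27/8000" by (simp add: power3_eq_cube)
    ultimately show ?thesis by linarith
  qed
  fix b :: fser and x y :: complex and a :: "nat \<Rightarrow> nat \<Rightarrow> complex"
  assume b: "is_bstar s b" and xya: "norm x < 1/20 \<and> norm y < 1/20 \<and> a \<in> Dinf s"
  have xy: "norm x \<le> r" "norm y \<le> r" using xya by (auto simp: r_def)
  have fbb: "fb r b 1" by (rule fb_bstar[OF r0 q2 q3 assms b])
  have p1: "fb r (psi1 b) (exp 1 * r)"
    unfolding psi1_def by (rule fb_fmul[OF r0 fb_fexp[OF r0 fbb] fb_fxi[OF r0]])
  have p2: "fb r (psi2 b) (exp 1 * r)"
    unfolding psi2_def by (rule fb_fmul[OF r0 fb_fexp[OF r0 fbb] fb_feta[OF r0]])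
  have lt: "exp 1 * r < 1/3" using q by (simp add: mult.commute)
  have c1: "abs_conv (psi1 b) x y a \<and> norm (fval (psi1 b) x y a) \<le> exp 1 * r"
    using fb_conv[OF p1 xy] xya by blast
  have c2: "abs_conv (psi2 b) x y a \<and> norm (fval (psi2 b) x y a) \<le> exp 1 * r"
    using fb_conv[OF p2 xy] xya by blast
  show "abs_conv (psi1 b) x y a" using c1 by blast
  show "abs_conv (psi2 b) x y a" using c2 by blast
  show "norm (fval (psi1 b) x y a) < 1/3" using c1 lt by linarith
  show "norm (fval (psi2 b) x y a) < 1/3" using c2 lt by linarith
qed simp_all

end
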